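(* Let $n$ be an odd integer with $2^{k-1}<n<2^k$, where $k=\lceil\log_2 n\rceil$, and suppose $n-1>2^{k-1}$. Let $s(x)=\min_{z\in\mathbb{Z}}|x-z|$ and, for integers $m$, define $f_i(m)=\frac{s(2^{i-k+1}\cdot m)}{2^{i-k+1}}$. Then for every $0\leq i\leq k-3$, $$f_i(n+1)+f_i(n-1)=2f_i(n).$$
   Context: $s(x)$ denotes the distance from the real number $x$ to the nearest integer. *)

theory Defs
  imports Complex_Main
begin

definition s :: "real \<Rightarrow> real" where
  "s x = (INF z::int. \<bar>x - real_of_int z\<bar>)"

definition f :: "nat \<Rightarrow> nat \<Rightarrow> int \<Rightarrow> real" where
  "f k i m = s (2 powr (real i - real k + 1) * real_of_int m) / 2 powr (real i - real k + 1)"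

end

theory Submission
  imports Defs
begin

lemma s_eq:
  assumes "\<bar>x - real_of_int z\<bar> \<le> 1/2"
  shows "s x = \<bar>x - real_of_int z\<bar>"
proof -
  have lb: "\<bar>x - real_of_int z\<bar> \<le> \<bar>x - real_of_int w\<bar>" for w
  proof (cases "w = z")
    case False
    then have "\<bar>w - z\<bar> \<ge> 1" by linarith
    then have "\<bar>real_of_int w - real_of_int z\<bar> \<ge> 1"
      by (metis of_int_1_le_iff of_int_abs of_int_diff)
    then show ?thesis using assms by linarith
  qed simp
  have "(INF w::int. \<bar>x - real_of_int w\<bar>) = \<bar>x - real_of_int z\<bar>"
  proof (rule antisym)
    show "(INF w::int. \<bar>x - real_of_int w\<bar>) \<le> \<bar>x - real_of_int z\<bar>"
      by (rule cINF_lower) (auto intro: bdd_belowI2[where m=0])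
    show "\<bar>x - real_of_int z\<bar> \<le> (INF w::int. \<bar>x - real_of_int w\<bar>)"
      by (rule cINF_greatest) (auto simp: lb)
  qed
  then show ?thesis by (simp add: s_def)
qed

theorem lemma5:
  fixes n :: int and k i :: nat
  assumes "odd n"
    and "int k = \<lceil>log 2 (real_of_int n)\<rceil>"
    and "2 ^ (k - 1) < n" and "n < 2 ^ k"
    and "n - 1 > 2 ^ (k - 1)"
    and "i + 3 \<le> k"
  shows "f k i (n + 1) + f k i (n - 1) = 2 * f k i n"
proof -
  define j where "j = k - 1 - i"
  have j2: "j \<ge> 2" using assms(6) unfolding j_def by linarith
  have "real i - real k + 1 = - real j" using assms(6) unfolding j_def by auto
  then have t: "2 powr (real i - real k + 1) = 1 / 2^j"
    by (simp add: powr_minus powr_realpow divide_inverse)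
  define M :: int where "M = 2^(j-1)"
  have M2: "(2::real)^j = 2 * real_of_int M"
    unfolding M_def using j2 by (simp add: power_eq_if[of 2 j])
  have Mev: "even M" unfolding M_def using j2 by simp
  have Mpos: "M > 0" unfolding M_def by simp
  have fm: "f k i m = s (real_of_int m / (2 * real_of_int M)) * (2 * real_of_int M)" for m
    unfolding f_def t M2 using Mpos by (simp add: field_simps)
  define q where "q = n div M"
  define r where "r = n mod M"
  have nq: "n = q * M + r" unfolding q_def r_def by simp
  have r0: "0 \<le> r" "r < M" unfolding r_def using Mpos by auto
  have "odd r" using assms(1) Mev nq by auto
  then have r1: "1 \<le> r" "r + 1 \<le> M" using r0 Mev by (auto elim!: oddE evenE)
  have key: "s (real_of_int (n + d) / (2 * real_of_int M)) =
      (if even q then real_of_int (r + d) / (2 * real_of_int M)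
       else real_of_int (M - r - d) / (2 * real_of_int M))"
    if "-1 \<le> d" "d \<le> 1" for d
  proof (cases "even q")
    case True
    then obtain p where p: "q = 2 * p" by auto
    have e: "real_of_int (n + d) / (2 * real_of_int M) - real_of_int p
        = real_of_int (r + d) / (2 * real_of_int M)"
      using Mpos unfolding nq p by (simp add: field_simps)
    have "0 \<le> real_of_int (r + d) / (2 * real_of_int M)"
      using that r1 Mpos by simp
    moreover have "real_of_int (r + d) / (2 * real_of_int M) \<le> 1/2"
      using that r1 Mpos by (simp add: field_simps)
    ultimately have "\<bar>real_of_int (n + d) / (2 * real_of_int M) - real_of_int p\<bar>
        = real_of_int (r + d) / (2 * real_of_int M)" "real_of_int (r + d) / (2 * real_of_int M) \<le> 1/2"
      unfolding e by (simp_all only: abs_of_nonneg abs_minus_cancel)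
    then show ?thesis using True s_eq[of "real_of_int (n + d) / (2 * real_of_int M)" p] by simp
  next
    case False
    then obtain p where p: "q = 2 * p + 1" by (auto elim: oddE)
    have e: "real_of_int (n + d) / (2 * real_of_int M) - real_of_int (p + 1)
        = - (real_of_int (M - r - d) / (2 * real_of_int M))"
      using Mpos unfolding nq p by (simp add: field_simps)
    have "0 \<le> real_of_int (M - r - d) / (2 * real_of_int M)"
      using that r1 Mpos by simp
    moreover have "real_of_int (M - r - d) / (2 * real_of_int M) \<le> 1/2"
      using that r1 Mpos by (simp add: field_simps)
    ultimately have "\<bar>real_of_int (n + d) / (2 * real_of_int M) - real_of_int (p+1)\<bar>
        = real_of_int (M - r - d) / (2 * real_of_int M)" "real_of_int (M - r - d) / (2 * real_of_int M) \<le> 1/2"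
      unfolding e by (simp_all only: abs_of_nonneg abs_minus_cancel)
    then show ?thesis using False s_eq[of "real_of_int (n + d) / (2 * real_of_int M)" "p+1"] by simp
  qed
  note k1 = key[of 1, simplified]
  note k2 = key[of "-1", simplified]
  note k3 = key[of 0, simplified]
  show ?thesis unfolding fm using k1 k2 k3 Mpos
    by (simp add: field_simps split: if_splits)
qed

end
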